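(* Let $a\in(0,0.01)$ be a constant and $k$ such that $ak$ is an even integer. Let $G$ be a graph and $K,K'$ vertex sets of size $k$ with $|K\cap K'|\ge(1-10a)k$ such that $F=G[K]\in\mathcal{F}_k$ with partitions $K=A\cup B$, $A=A_1\cup\dots\cup A_r$, and $F'=G[K']\in\mathcal{F}_k$ with partitions $K'=A'\cup B'$, $A'=A'_1\cup\dots\cup A'_r$ (as in the definition of $\mathcal{F}_k$). Then: 1. a vertex $v\in K\cap K'$ lies in $A$ if and only if it lies in $A'$; 2. for $u,v\in A\cap A'$, $\{u,v\}=A_j$ for some $j$ if and only if $\{u,v\}=A'_{j'}$ for some $j'$.
   Context: A graph $F$ on a $k$-set $K$ is in $\mathcal{F}_k$ with respect to partitions $K=A\cup B$, $A=A_1\cup\dots\cup A_r$, where $|A|=ak$, $|B|=(1-a)k$, $r=ak/2$, $|A_i|=2$, if: (1) $F$ is bipartite with parts $A$ and $B$; (2) for every $i$ and every $\beta\in B$, $\beta$ is adjacent either to both vertices of $A_i$ or to neither; (3) every vertex of $A$ has degree at least $0.15k$ in $F$; (4) for all $i\ne j$, the symmetric difference of the neighborhoods of $A_i$ and $A_j$ has size at least $0.25k$. *)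

theory Defs
  imports Complex_Main
begin

definition simple_graph :: "('v \<Rightarrow> 'v \<Rightarrow> bool) \<Rightarrow> bool" where
  "simple_graph E \<longleftrightarrow> (\<forall>x y. E x y \<longrightarrow> E y x) \<and> (\<forall>x. \<not> E x x)"

definition nbhd_in :: "('v \<Rightarrow> 'v \<Rightarrow> bool) \<Rightarrow> 'v set \<Rightarrow> 'v set \<Rightarrow> 'v set" where
  "nbhd_in E K S = {w \<in> K. \<exists>s\<in>S. E s w}"

text \<open>The induced subgraph G[K] (G given by E) lies in the family F_k with respect to
  the partitions K = A \<union> B and A = A_0 \<union> ... \<union> A_(r-1) (pairs indexed by i < r),
  where |A| = a k, |B| = (1-a) k, r = a k / 2, |A_i| = 2.\<close>
definition in_Fk ::
  "('v \<Rightarrow> 'v \<Rightarrow> bool) \<Rightarrow> nat \<Rightarrow> real \<Rightarrow> nat \<Rightarrow> 'v set \<Rightarrow> 'v set \<Rightarrow> 'v set \<Rightarrow> (nat \<Rightarrow> 'v set) \<Rightarrow> bool"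
  where
  "in_Fk E k a r K A B Ai \<longleftrightarrow>
     finite K \<and> card K = k \<and>
     K = A \<union> B \<and> A \<inter> B = {} \<and>
     real (card A) = a * real k \<and> real (card B) = (1 - a) * real k \<and>
     2 * real r = a * real k \<and>
     (\<forall>i<r. card (Ai i) = 2) \<and>
     (\<forall>i<r. \<forall>j<r. i \<noteq> j \<longrightarrow> Ai i \<inter> Ai j = {}) \<and>
     (\<Union>i<r. Ai i) = A \<and>
     \<comment> \<open>(1) bipartite with parts A and B\<close>
     (\<forall>x\<in>A. \<forall>y\<in>A. \<not> E x y) \<and> (\<forall>x\<in>B. \<forall>y\<in>B. \<not> E x y) \<and>
     \<comment> \<open>(2) each vertex of B is adjacent to both or neither vertex of each A_i\<close>
     (\<forall>i<r. \<forall>\<beta>\<in>B. (\<forall>x\<in>Ai i. E \<beta> x) \<or> (\<forall>x\<in>Ai i. \<not> E \<beta> x)) \<and>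
     \<comment> \<open>(3) minimum degree in F of vertices of A\<close>
     (\<forall>v\<in>A. real (card (nbhd_in E K {v})) \<ge> 0.15 * real k) \<and>
     \<comment> \<open>(4) neighbourhoods of distinct pairs differ a lot\<close>
     (\<forall>i<r. \<forall>j<r. i \<noteq> j \<longrightarrow>
        real (card ((nbhd_in E K (Ai i) - nbhd_in E K (Ai j)) \<union>
                    (nbhd_in E K (Ai j) - nbhd_in E K (Ai i)))) \<ge> 0.25 * real k)"

end

theory Submission
  imports Defs
begin

lemma Fk:
  assumes "in_Fk E k a r K A B Ai"
  shows Fk_fin: "finite K" and Fk_card: "card K = k" and Fk_K: "K = A \<union> B"
    and Fk_AB: "A \<inter> B = {}" and Fk_cA: "real (card A) = a * real k"
    and Fk_r: "2 * real r = a * real k"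
    and Fk_c2: "\<And>i. i<r \<Longrightarrow> card (Ai i) = 2"
    and Fk_U: "(\<Union>i<r. Ai i) = A"
    and Fk_indA: "\<And>x y. x\<in>A \<Longrightarrow> y\<in>A \<Longrightarrow> \<not> E x y"
    and Fk_indB: "\<And>x y. x\<in>B \<Longrightarrow> y\<in>B \<Longrightarrow> \<not> E x y"
    and Fk_hom: "\<And>i \<beta>. i<r \<Longrightarrow> \<beta>\<in>B \<Longrightarrow> (\<forall>x\<in>Ai i. E \<beta> x) \<or> (\<forall>x\<in>Ai i. \<not> E \<beta> x)"
    and Fk_deg: "\<And>v. v\<in>A \<Longrightarrow> real (card (nbhd_in E K {v})) \<ge> 0.15 * real k"
    and Fk_sd: "\<And>i j. i<r \<Longrightarrow> j<r \<Longrightarrow> i \<noteq> j \<Longrightarrow>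
        real (card ((nbhd_in E K (Ai i) - nbhd_in E K (Ai j)) \<union>
                    (nbhd_in E K (Ai j) - nbhd_in E K (Ai i)))) \<ge> 0.25 * real k"
  using assms unfolding in_Fk_def by auto

lemma diff_bound:
  assumes "finite K'" "card K' = k" "real (card (K \<inter> K')) \<ge> (1 - 10 * a) * real k"
  shows "real (card (K' - K)) \<le> 10 * a * real k"
proof -
  have "card K' = card (K' - K) + card (K' \<inter> K)"
  proof -
    have "K' = (K' - K) \<union> (K' \<inter> K)" by blast
    hence "card K' = card ((K' - K) \<union> (K' \<inter> K))" by simp
    also have "\<dots> = card (K' - K) + card (K' \<inter> K)"
      by (rule card_Un_disjoint) (use assms(1) in auto)
    finally show ?thesis .
  qed
  moreover have "K' \<inter> K = K \<inter> K'" by blast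
  ultimately show ?thesis using assms(2,3) by (simp add: algebra_simps)
qed

lemma nb_pair:
  assumes F: "in_Fk E k a r K A B Ai" and g: "simple_graph E" and i: "i < r" and x: "x \<in> Ai i"
  shows "nbhd_in E K (Ai i) = nbhd_in E K {x}"
proof
  show "nbhd_in E K {x} \<subseteq> nbhd_in E K (Ai i)" using x unfolding nbhd_in_def by auto
next
  show "nbhd_in E K (Ai i) \<subseteq> nbhd_in E K {x}"
  proof
    fix y assume "y \<in> nbhd_in E K (Ai i)"
    then obtain s where y: "y \<in> K" and s: "s \<in> Ai i" and e: "E s y"
      unfolding nbhd_in_def by auto
    have sA: "s \<in> A" using Fk_U[OF F] s i by blast
    have "y \<notin> A" using Fk_indA[OF F] sA e by blast
    hence yB: "y \<in> B" using Fk_K[OF F] y by blast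
    have e2: "E y s" using g e unfolding simple_graph_def by blast
    have "(\<forall>z\<in>Ai i. E y z) \<or> (\<forall>z\<in>Ai i. \<not> E y z)" using Fk_hom[OF F i yB] .
    hence "E y x" using e2 s x by blast
    hence "E x y" using g unfolding simple_graph_def by blast
    thus "y \<in> nbhd_in E K {x}" using y unfolding nbhd_in_def by auto
  qed
qed

lemma part1:
  assumes F: "in_Fk E k a r K A B Ai" and F': "in_Fk E k a r K' A' B' Ai'"
    and g: "simple_graph E" and a: "0 < a" "a < 0.01"
    and c: "real (card (K \<inter> K')) \<ge> (1 - 10 * a) * real k"
    and v: "v \<in> K \<inter> K'" "v \<in> A"
  shows "v \<in> A'"
proof (rule ccontr)
  assume "v \<notin> A'"
  hence vB: "v \<in> B'" using Fk_K[OF F'] v by blast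
  define N where "N = nbhd_in E K {v}"
  have fK: "finite K" "card K = k" using Fk_fin[OF F] Fk_card[OF F] by auto
  have fK': "finite K'" "card K' = k" using Fk_fin[OF F'] Fk_card[OF F'] by auto
  have sub: "N \<inter> K' \<subseteq> A'"
  proof
    fix x assume x: "x \<in> N \<inter> K'"
    hence "E v x" unfolding N_def nbhd_in_def by auto
    hence "x \<notin> B'" using Fk_indB[OF F'] vB by blast
    thus "x \<in> A'" using Fk_K[OF F'] x by blast
  qed
  have fA': "finite A'" using fK'(1) Fk_K[OF F'] by (metis finite_Un)
  have "N \<subseteq> (N \<inter> K') \<union> (K - K')" unfolding N_def nbhd_in_def by auto
  hence "card N \<le> card ((N \<inter> K') \<union> (K - K'))"
    by (rule card_mono[rotated]) (use fK(1) fK'(1) in auto)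
  also have "\<dots> \<le> card (N \<inter> K') + card (K - K')" by (rule card_Un_le)
  finally have "card N \<le> card (N \<inter> K') + card (K - K')" .
  moreover have "card (N \<inter> K') \<le> card A'" using card_mono[OF fA' sub] .
  moreover have "real (card A') = a * real k" using Fk_cA[OF F'] .
  moreover have "real (card (K - K')) \<le> 10 * a * real k"
    using diff_bound[OF fK(1) fK(2), where K=K' and a=a] c by (simp add: Int_commute)
  moreover have "real (card N) \<ge> 0.15 * real k" using Fk_deg[OF F v(2)] unfolding N_def .
  moreover have "k > 0" using fK v by (metis IntD1 card_gt_0_iff empty_iff)
  ultimately have "0.15 * real k \<le> a * real k + 10 * a * real k"
    by (smt (verit) of_nat_add of_nat_le_iff)
  moreover have "a * real k < 0.01 * real k" using a \<open>k > 0\<close> by simp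
  ultimately show False using \<open>k > 0\<close> by simp
qed

lemma part2:
  assumes F: "in_Fk E k a r K A B Ai" and F': "in_Fk E k a r K' A' B' Ai'"
    and g: "simple_graph E" and a: "0 < a" "a < 0.01"
    and c: "real (card (K \<inter> K')) \<ge> (1 - 10 * a) * real k"
    and u: "u \<in> A \<inter> A'" and v: "v \<in> A \<inter> A'" and j: "j < r" and p: "{u,v} = Ai j"
  shows "\<exists>j'<r. {u, v} = Ai' j'"
proof -
  have fK': "finite K'" "card K' = k" using Fk_fin[OF F'] Fk_card[OF F'] by auto
  have "card {u,v} = 2" using Fk_c2[OF F j] p by simp
  hence uv: "u \<noteq> v" by auto
  obtain j1 where j1: "j1 < r" "u \<in> Ai' j1" using Fk_U[OF F'] u by auto
  obtain j2 where j2: "j2 < r" "v \<in> Ai' j2" using Fk_U[OF F'] v by auto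
  show ?thesis
  proof (cases "j1 = j2")
    case True
    have c2: "card (Ai' j1) = 2" using Fk_c2[OF F' j1(1)] .
    moreover have "{u,v} \<subseteq> Ai' j1" using j1 j2 True by auto
    moreover have "finite (Ai' j1)" using c2 card.infinite by fastforce
    ultimately have "{u,v} = Ai' j1" using uv \<open>card {u,v} = 2\<close>
      by (metis card_subset_eq)
    thus ?thesis using j1 by blast
  next
    case False
    have n1: "nbhd_in E K' (Ai' j1) = nbhd_in E K' {u}" using nb_pair[OF F' g j1] .
    have n2: "nbhd_in E K' (Ai' j2) = nbhd_in E K' {v}" using nb_pair[OF F' g j2] .
    have "nbhd_in E K {u} = nbhd_in E K (Ai j)" using nb_pair[OF F g j, of u] p by auto
    also have "\<dots> = nbhd_in E K {v}" using nb_pair[OF F g j, of v] p by auto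
    finally have nn: "nbhd_in E K {u} = nbhd_in E K {v}" .
    let ?D = "(nbhd_in E K' (Ai' j1) - nbhd_in E K' (Ai' j2)) \<union>
                    (nbhd_in E K' (Ai' j2) - nbhd_in E K' (Ai' j1))"
    have "?D \<subseteq> K' - K"
    proof
      fix x assume x: "x \<in> ?D"
      hence xK': "x \<in> K'" unfolding nbhd_in_def by auto
      have "x \<notin> K"
      proof
        assume xK: "x \<in> K"
        have "E u x = E v x" using nn xK unfolding nbhd_in_def set_eq_iff by auto
        thus False using x xK' n1 n2 unfolding nbhd_in_def by auto
      qed
      thus "x \<in> K' - K" using xK' by auto
    qed
    hence "card ?D \<le> card (K' - K)" using fK' by (simp add: card_mono)
    moreover have "real (card (K' - K)) \<le> 10 * a * real k" using diff_bound[OF fK'(1) fK'(2) c] .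
    moreover have "real (card ?D) \<ge> 0.25 * real k" using Fk_sd[OF F' j1(1) j2(1) False] .
    moreover have "k > 0"
    proof (rule ccontr)
      assume "\<not> k > 0" hence "k = 0" by simp
      hence "r = 0" using Fk_r[OF F] by simp
      thus False using j by simp
    qed
    ultimately have "0.25 * real k \<le> 10 * a * real k"
      by (smt (verit) of_nat_le_iff)
    moreover have "a * real k < 0.01 * real k" using a \<open>k > 0\<close> by simp
    ultimately have False using \<open>k > 0\<close> by simp
    thus ?thesis ..
  qed
qed

theorem mainTheorem14:
  fixes E :: "'v \<Rightarrow> 'v \<Rightarrow> bool" and a :: real and k r :: nat
    and K K' A B A' B' :: "'v set" and Ai Ai' :: "nat \<Rightarrow> 'v set"
  assumes "0 < a" and "a < 0.01"
    and "\<exists>m::nat. a * real k = 2 * real m"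
    and "simple_graph E"
    and "finite K" and "finite K'" and "card K = k" and "card K' = k"
    and "real (card (K \<inter> K')) \<ge> (1 - 10 * a) * real k"
    and "in_Fk E k a r K A B Ai"
    and "in_Fk E k a r K' A' B' Ai'"
  shows "(\<forall>v\<in>K \<inter> K'. v \<in> A \<longleftrightarrow> v \<in> A') \<and>
         (\<forall>u\<in>A \<inter> A'. \<forall>v\<in>A \<inter> A'.
            (\<exists>j<r. {u, v} = Ai j) \<longleftrightarrow> (\<exists>j'<r. {u, v} = Ai' j'))"
proof -
  have c': "real (card (K' \<inter> K)) \<ge> (1 - 10 * a) * real k" using assms(9) by (simp add: Int_commute)
  show ?thesis
  proof (intro conjI ballI iffI)
    fix v assume "v \<in> K \<inter> K'" "v \<in> A"
    thus "v \<in> A'" using part1[OF assms(10,11,4,1,2,9)] by blast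
  next
    fix v assume "v \<in> K \<inter> K'" "v \<in> A'"
    thus "v \<in> A" using part1[OF assms(11,10,4,1,2) c', of v] by blast
  next
    fix u v assume "u \<in> A \<inter> A'" "v \<in> A \<inter> A'" "\<exists>j<r. {u, v} = Ai j"
    thus "\<exists>j'<r. {u, v} = Ai' j'" using part2[OF assms(10,11,4,1,2,9)] by blast
  next
    fix u v assume "u \<in> A \<inter> A'" "v \<in> A \<inter> A'" "\<exists>j<r. {u, v} = Ai' j"
    thus "\<exists>j'<r. {u, v} = Ai j'" using part2[OF assms(11,10,4,1,2) c', of u v] by blast
  qed
qed

end
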